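(* Assume $\mu_1=\mu_2=\mu_3=1$. For any decision points, every point of every periodic orbit of the triangle process lies in ${}^VA$.
   Context: Fix $\rho_1,\rho_2,\rho_3\in(0,1)$ with $\rho_1+\rho_2+\rho_3>1$, $\lambda_i=\rho_i$, $\mu_i=1$, $\theta:=\rho_1+\rho_2+\rho_3-1$. $A_i^0:=\{y\in\mathbb R^3: y_1+y_2+y_3=1, y_i=0, y_l\ge0\}$, $A^0:=\bigcup_iA_i^0$. For $z\in A^0\setminus A_j^0$, $f_j(z):=\sum_{i\neq j}\frac{(1-\rho_j)z_i+\rho_i z_j}{(1-\rho_j)+\theta z_j}e_i$. For $(\hat i,\hat j,\hat k)$ equal to $(1,2,3)$ or a cyclic permutation, $(1-x)e_{\hat j}+xe_{\hat k}\in A^0_{\hat i}$ is written $(x,\hat i)$. ${}^VA_{\hat i}:=\{(x,\hat i):\max(0,1-\rho_{\hat j}/\theta)\le x\le\min(1,\rho_{\hat k}/\theta)\}$, ${}^VA:=\bigcup_{\hat i}{}^VA_{\hat i}$. Decision points $d_1,d_2,d_3\in(0,1)$; switching rule $\mathfrak R((x,\hat i))=\hat j$ if $x<d_{\hat i}$, $\hat k$ if $x>d_{\hat i}$, both allowed if $x=d_{\hat i}$; $\varphi(z):=f_{\mathfrak R(z)}(z)$ (two-valued at decision points). A periodic orbit is $u_1,\dots,u_m\in A^0$ with $u_{n+1}\in\varphi(u_n)$ for $n<m$ and $u_1\in\varphi(u_m)$. *)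

theory Defs
  imports "HOL-Analysis.Analysis"
begin

text \<open>Points of R^3 are vectors of type real^3; the index type 3 is cyclic
  (arithmetic mod 3), so for an index i the cyclic successors are i+1 and i+2,
  i.e. (i,j,k) = (i, i+1, i+2) runs over (1,2,3) and its cyclic permutations.
  The service rates mu_i are all 1 and lambda_i = rho_i, as in the context.\<close>

definition unitv :: "3 \<Rightarrow> real^3" where
  "unitv i = axis i 1"

definition theta :: "real^3 \<Rightarrow> real" where
  "theta \<rho> = (\<Sum>i\<in>UNIV. \<rho>$i) - 1"

definition A0i :: "3 \<Rightarrow> (real^3) set" where
  "A0i i = {y. (\<Sum>l\<in>UNIV. y$l) = 1 \<and> y$i = 0 \<and> (\<forall>l. 0 \<le> y$l)}"

definition A0 :: "(real^3) set" where
  "A0 = (\<Union>i. A0i i)"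

definition fmap :: "real^3 \<Rightarrow> 3 \<Rightarrow> real^3 \<Rightarrow> real^3" where
  "fmap \<rho> j z = (\<Sum>i\<in>UNIV - {j}.
     (((1 - \<rho>$j) * z$i + \<rho>$i * z$j) / ((1 - \<rho>$j) + theta \<rho> * z$j)) *\<^sub>R unitv i)"

text \<open>The point (x, i) := (1-x) e_(i+1) + x e_(i+2) of A0_i.\<close>
definition edge_pt :: "real \<Rightarrow> 3 \<Rightarrow> real^3" where
  "edge_pt x i = (1 - x) *\<^sub>R unitv (i + 1) + x *\<^sub>R unitv (i + 2)"

definition VAi :: "real^3 \<Rightarrow> 3 \<Rightarrow> (real^3) set" where
  "VAi \<rho> i = {edge_pt x i | x.
      max 0 (1 - \<rho>$(i+1) / theta \<rho>) \<le> x \<and> x \<le> min 1 (\<rho>$(i+2) / theta \<rho>)}"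

definition VA :: "real^3 \<Rightarrow> (real^3) set" where
  "VA \<rho> = (\<Union>i. VAi \<rho> i)"

text \<open>Two-valued map phi: w \<in> phi(z) iff z = (x,i) and, according to the switching
  rule with decision points d, w = f_(i+1)(z) (if x \<le> d_i) or w = f_(i+2)(z)
  (if x \<ge> d_i); at x = d_i both are allowed.\<close>
definition phi_step :: "real^3 \<Rightarrow> real^3 \<Rightarrow> real^3 \<Rightarrow> real^3 \<Rightarrow> bool" where
  "phi_step \<rho> d z w \<longleftrightarrow> (\<exists>i x. 0 \<le> x \<and> x \<le> 1 \<and> z = edge_pt x i \<and>
      ((x \<le> d$i \<and> w = fmap \<rho> (i + 1) z) \<or> (d$i \<le> x \<and> w = fmap \<rho> (i + 2) z)))"

definition periodic_orbit :: "real^3 \<Rightarrow> real^3 \<Rightarrow> nat \<Rightarrow> (nat \<Rightarrow> real^3) \<Rightarrow> bool" where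
  "periodic_orbit \<rho> d m u \<longleftrightarrow> 1 \<le> m \<and> (\<forall>n\<in>{1..m}. u n \<in> A0) \<and>
      (\<forall>n\<in>{1..<m}. phi_step \<rho> d (u n) (u (n + 1))) \<and> phi_step \<rho> d (u m) (u 1)"

end

theory Submission
  imports Defs
begin

lemma t3: fixes i l :: 3 shows "i+1 \<noteq> i \<and> i+2 \<noteq> i \<and> i+1 \<noteq> i+2 \<and> (l = i \<or> l = i+1 \<or> l = i+2)"
  using exhaust_3[of i] exhaust_3[of l] by auto

lemma univ3: "(UNIV::3 set) = {i, i+1, i+2}"
  using t3[of i] by blast

lemma sum3: "(\<Sum>l\<in>UNIV. (y::real^3)$l) = y$i + y$(i+1) + y$(i+2)"
proof -
  have "(\<Sum>l\<in>UNIV. y$l) = (\<Sum>l\<in>{i, i+1, i+2}. y$l)" by (simp only: univ3[of i, symmetric])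
  also have "\<dots> = y$i + y$(i+1) + y$(i+2)" using t3[of i i] by simp
  finally show ?thesis .
qed

lemma unitv_nth: "unitv i $ l = (if l = i then 1 else 0)"
  by (simp add: unitv_def axis_def)

lemma edge_nth: "edge_pt x i $ l = (if l = i+1 then 1 - x else 0) + (if l = i+2 then x else 0)"
  by (simp add: edge_pt_def unitv_nth)

lemma fmap_nth: "fmap \<rho> j z $ l = (if l = j then 0 else
   ((1 - \<rho>$j) * z$l + \<rho>$l * z$j) / ((1 - \<rho>$j) + theta \<rho> * z$j))"
proof -
  have "fmap \<rho> j z $ l = (\<Sum>i\<in>UNIV - {j}.
     (((1 - \<rho>$j) * z$i + \<rho>$i * z$j) / ((1 - \<rho>$j) + theta \<rho> * z$j)) * (if l = i then 1 else 0))"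
    by (simp add: fmap_def unitv_nth)
  also have "\<dots> = (if l = j then 0 else
   ((1 - \<rho>$j) * z$l + \<rho>$l * z$j) / ((1 - \<rho>$j) + theta \<rho> * z$j))"
    by (simp add: sum.delta' if_distrib cong: if_cong)
  finally show ?thesis .
qed

definition Pp :: "real^3 \<Rightarrow> real^3 \<Rightarrow> real" where
  "Pp \<rho> z = Max (insert 0 (range (\<lambda>l. theta \<rho> * z$l - \<rho>$l)))"

lemma Pp_ge0: "0 \<le> Pp \<rho> z"
  unfolding Pp_def by (simp)

lemma Pp_ge: "theta \<rho> * z$l - \<rho>$l \<le> Pp \<rho> z"
  unfolding Pp_def by (rule Max_ge) auto

lemma Pp_le: "0 \<le> B \<Longrightarrow> (\<And>l. theta \<rho> * z$l - \<rho>$l \<le> B) \<Longrightarrow> Pp \<rho> z \<le> B"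
  unfolding Pp_def by (subst Max_le_iff) auto

lemma hdiv: "(D::real) \<noteq> 0 \<Longrightarrow> t * (a / D) - r = (t * a - r * D) / D"
  by (simp add: field_simps)

lemma step:
  assumes r: "\<forall>i. 0 < \<rho>$i \<and> \<rho>$i < 1" and th: "theta \<rho> > 0"
    and d: "\<forall>i. 0 < d$i \<and> d$i < 1"
    and ps: "phi_step \<rho> d z w"
  shows "\<exists>c. 0 \<le> c \<and> c < 1 \<and> Pp \<rho> w \<le> c * Pp \<rho> z"
proof -
  obtain j where zj: "z$j > 0" and w: "w = fmap \<rho> j z"
  proof -
    from ps obtain i x where x: "0 \<le> x" "x \<le> 1" "z = edge_pt x i" and
      c: "(x \<le> d$i \<and> w = fmap \<rho> (i + 1) z) \<or> (d$i \<le> x \<and> w = fmap \<rho> (i + 2) z)"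
      unfolding phi_step_def by blast
    have a: "z$(i+1) = 1 - x" "z$(i+2) = x" using t3[of i i] x(3) by (auto simp: edge_nth)
    from c show ?thesis
    proof
      assume h: "x \<le> d$i \<and> w = fmap \<rho> (i + 1) z"
      have "d$i < 1" using d by blast
      then have "z$(i+1) > 0" using a h by simp
      then show ?thesis using that h by blast
    next
      assume h: "d$i \<le> x \<and> w = fmap \<rho> (i + 2) z"
      have "0 < d$i" using d by blast
      then have "z$(i+2) > 0" using a h by simp
      then show ?thesis using that h by blast
    qed
  qed
  define D where "D = (1 - \<rho>$j) + theta \<rho> * z$j"
  define c where "c = (1 - \<rho>$j) / D"
  have rj: "0 < \<rho>$j" "\<rho>$j < 1" using r by auto
  have Dp: "D > 1 - \<rho>$j" unfolding D_def using th zj by simp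
  have c0: "0 \<le> c" "c < 1" unfolding c_def using Dp rj by auto
  have "Pp \<rho> w \<le> c * Pp \<rho> z"
  proof (rule Pp_le)
    show "0 \<le> c * Pp \<rho> z" using c0 Pp_ge0 by simp
    fix l
    show "theta \<rho> * w$l - \<rho>$l \<le> c * Pp \<rho> z"
    proof (cases "l = j")
      case True
      then show ?thesis using w r \<open>0 \<le> c * Pp \<rho> z\<close> by (simp add: fmap_nth) (smt (verit))
    next
      case False
      have Dn: "D \<noteq> 0" using Dp rj by linarith
      have wl: "w$l = ((1 - \<rho>$j) * z$l + \<rho>$l * z$j) / D"
        using False w by (simp add: fmap_nth D_def)
      have num: "theta \<rho> * ((1 - \<rho>$j) * z$l + \<rho>$l * z$j) - \<rho>$l * D
          = (1 - \<rho>$j) * (theta \<rho> * z$l - \<rho>$l)" unfolding D_def by (simp add: algebra_simps)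
      have "theta \<rho> * w$l - \<rho>$l = (theta \<rho> * ((1 - \<rho>$j) * z$l + \<rho>$l * z$j) - \<rho>$l * D) / D"
        unfolding wl by (rule hdiv[OF Dn])
      also have "\<dots> = c * (theta \<rho> * z$l - \<rho>$l)" unfolding num c_def by simp
      also have "\<dots> \<le> c * Pp \<rho> z" using c0 Pp_ge by (simp add: mult_left_mono)
      finally show ?thesis .
    qed
  qed
  then show ?thesis using c0 by blast
qed

lemma step_mono:
  assumes "\<forall>i. 0 < \<rho>$i \<and> \<rho>$i < 1" "theta \<rho> > 0" "\<forall>i. 0 < d$i \<and> d$i < 1"
    "phi_step \<rho> d z w"
  shows "Pp \<rho> w \<le> Pp \<rho> z" "Pp \<rho> z > 0 \<Longrightarrow> Pp \<rho> w < Pp \<rho> z"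
proof -
  obtain c where c: "0 \<le> c" "c < 1" "Pp \<rho> w \<le> c * Pp \<rho> z" using step[OF assms] by blast
  have "c * Pp \<rho> z \<le> Pp \<rho> z" using c Pp_ge0[of \<rho> z] by (simp add: mult_left_le_one_le)
  then show "Pp \<rho> w \<le> Pp \<rho> z" using c by simp
  assume "Pp \<rho> z > 0"
  then have "c * Pp \<rho> z < Pp \<rho> z" using c by simp
  then show "Pp \<rho> w < Pp \<rho> z" using c by simp
qed

lemma good_VA:
  assumes th: "theta \<rho> > 0" and z: "z \<in> A0" and P: "Pp \<rho> z = 0"
  shows "z \<in> VA \<rho>"
proof -
  obtain i where zi: "(\<Sum>l\<in>UNIV. z$l) = 1" "z$i = 0" "\<forall>l. 0 \<le> z$l"
    using z unfolding A0_def A0i_def by blast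
  have s: "z$(i+1) + z$(i+2) = 1" using zi sum3[of z i] by simp
  define x where "x = z$(i+2)"
  have eq: "z = edge_pt x i"
    unfolding vec_eq_iff
  proof
    fix l
    show "z$l = edge_pt x i $ l"
      using t3[of i l] zi s unfolding x_def edge_nth by auto
  qed
  have g: "theta \<rho> * z$l \<le> \<rho>$l" for l using Pp_ge[of \<rho> z l] P by simp
  have b1: "x \<le> \<rho>$(i+2) / theta \<rho>" using g[of "i+2"] th unfolding x_def
    by (simp add: field_simps)
  have zi1: "z$(i+1) = 1 - x" using s unfolding x_def by simp
  have h: "theta \<rho> * (1 - x) \<le> \<rho>$(i+1)" using g[of "i+1"] unfolding zi1 .
  have iff: "1 - \<rho>$(i+1) / theta \<rho> \<le> x \<longleftrightarrow> theta \<rho> - \<rho>$(i+1) \<le> theta \<rho> * x"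
    using th by (simp add: field_simps)
  have b2: "1 - \<rho>$(i+1) / theta \<rho> \<le> x" unfolding iff using h by (simp add: algebra_simps)
  have "0 \<le> x" "x \<le> 1" using zi s unfolding x_def by (auto) (smt (verit) zi(3))
  then have "z \<in> VAi \<rho> i" unfolding VAi_def using eq b1 b2 by auto
  then show ?thesis unfolding VA_def by blast
qed

theorem lemma4p4:
  fixes \<rho> d :: "real^3" and m :: nat and u :: "nat \<Rightarrow> real^3"
  assumes "\<forall>i. 0 < \<rho>$i \<and> \<rho>$i < 1"
    and "(\<Sum>i\<in>UNIV. \<rho>$i) > 1"
    and "\<forall>i. 0 < d$i \<and> d$i < 1"
    and "periodic_orbit \<rho> d m u"
  shows "\<forall>n\<in>{1..m}. u n \<in> VA \<rho>"
proof -
  have th: "theta \<rho> > 0" using assms(2) unfolding theta_def by simp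
  have m1: "1 \<le> m" and A: "\<forall>n\<in>{1..m}. u n \<in> A0"
    and st: "\<forall>n\<in>{1..<m}. phi_step \<rho> d (u n) (u (n + 1))" and last: "phi_step \<rho> d (u m) (u 1)"
    using assms(4) unfolding periodic_orbit_def by auto
  have mono: "Pp \<rho> (u n) \<le> Pp \<rho> (u 1)" if "1 \<le> n" "n \<le> m" for n
    using that
  proof (induction n rule: dec_induct)
    case base then show ?case by simp
  next
    case (step k)
    have "phi_step \<rho> d (u k) (u (k + 1))" using st step by auto
    then have "Pp \<rho> (u (Suc k)) \<le> Pp \<rho> (u k)" using step_mono(1)[OF assms(1) th assms(3)] by simp
    then show ?case using step by simp
  qed
  have e1: "Pp \<rho> (u 1) \<le> Pp \<rho> (u m)" using step_mono(1)[OF assms(1) th assms(3) last] .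
  have z1: "Pp \<rho> (u 1) = 0"
  proof (rule ccontr)
    assume "Pp \<rho> (u 1) \<noteq> 0"
    then have "Pp \<rho> (u m) > 0" using e1 Pp_ge0[of \<rho> "u 1"] by simp
    then have "Pp \<rho> (u 1) < Pp \<rho> (u m)" using step_mono(2)[OF assms(1) th assms(3) last] by simp
    then show False using mono[of m] m1 by simp
  qed
  show ?thesis
  proof
    fix n assume n: "n \<in> {1..m}"
    have "Pp \<rho> (u n) = 0" using mono[of n] n z1 Pp_ge0[of \<rho> "u n"] by simp
    then show "u n \<in> VA \<rho>" using good_VA[OF th] A n by blast
  qed
qed

end
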